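(* Let $Y$ be a solid vector space, $(X,d)$ a cone metric space over $Y$, $D\subseteq X$ and $T\colon D\to X$. Suppose that for some $x_0\in D$ the Picard iteration $x_{n+1}=Tx_n$ ($n\ge0$) is well defined (i.e. $x_n\in D$ for all $n$) and converges to a point $\xi\in D$. Then each of the following conditions implies that $T\xi=\xi$: (F1) $T$ is continuous at $\xi$; (F2) $T$ has a closed graph, i.e. $\{(x,Tx):x\in D\}$ is closed in $D\times X$; (F3) for some semimonotone norm $\|\cdot\|$ on $Y$, the function $G(x)=\|d(x,Tx)\|$ is lower semicontinuous at $\xi$; (F4) there are real $\alpha,\beta\ge0$ with $d(\xi,T\xi)\preceq\alpha\,d(x,\xi)+\beta\,d(Tx,\xi)$ for each $x\in D$.
   Context: Vector space with convergence: a real vector space $Y$ with a relation $\to$ between sequences in $Y$ and points of $Y$ (uniqueness of limits not assumed) such that (C1) $x_n\to x$, $y_n\to y$ imply $x_n+y_n\to x+y$; (C2) $x_n\to x$, $\lambda\in\mathbb R$ imply $\lambda x_n\to\lambda x$; (C3) $\lambda_n\to\lambda$ in $\mathbb R$ imply $\lambda_n x\to\lambda x$. $A\subseteq Y$ is open if $x_n\to x\in A$ implies $x_n\in A$ for all but finitely many $n$; closed if $x_n\to x$, $x_n\in A$ $\forall n$ imply $x\in A$; $A^\circ$ is the union of all open subsets of $A$. A cone is a nonempty closed $K$ with $\lambda K\subseteq K$ ($\lambda\ge0$), $K+K\subseteq K$, $K\cap(-K)=\{0\}$; solid if $K\ne\{0\}$, $K^\circ\ne\emptyset$. A vector ordering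 is a partial order $\preceq$ with (V1) $x\preceq y\Rightarrow x+z\preceq y+z$; (V2) $\lambda\ge0$, $x\preceq y\Rightarrow\lambda x\preceq\lambda y$; (V3) $x_n\to x$, $y_n\to y$, $x_n\preceq y_n$ $\forall n\Rightarrow x\preceq y$. Solid vector space: positive cone $K=\{x:x\succeq0\}$ solid, with $x\prec y$ iff $y-x\in K^\circ$. A norm $\|\cdot\|$ on $Y$ is semimonotone if there is $C>0$ with $\|x\|\le C\|y\|$ whenever $0\preceq x\preceq y$. Cone metric space over $Y$: nonempty $X$ with $d\colon X\times X\to Y$, $d(x,y)\succeq0$, $d(x,y)=0$ iff $x=y$, $d(x,y)=d(y,x)$, $d(x,y)\preceq d(x,z)+d(z,y)$. $X$ carries the topology with basis $U(x,r)=\{y:d(y,x)\prec r\}$ ($r\succ0$); $x_n\to x$ iff for every $c\succ0$, $d(x_n,x)\prec c$ for all but finitely many $n$. Continuity and lower semicontinuity refer to this topology (restricted to $D$). *)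

theory Defs
  imports "HOL-Analysis.Analysis"
begin

definition vs_conv :: "((nat \<Rightarrow> 'y::real_vector) \<Rightarrow> 'y \<Rightarrow> bool) \<Rightarrow> bool" where
  "vs_conv conv \<longleftrightarrow>
     (\<forall>xs x ys y. conv xs x \<and> conv ys y \<longrightarrow> conv (\<lambda>n. xs n + ys n) (x + y)) \<and>
     (\<forall>xs x (c::real). conv xs x \<longrightarrow> conv (\<lambda>n. c *\<^sub>R xs n) (c *\<^sub>R x)) \<and>
     (\<forall>(ls::nat \<Rightarrow> real) l x. ls \<longlonglongrightarrow> l \<longrightarrow> conv (\<lambda>n. ls n *\<^sub>R x) (l *\<^sub>R x))"

definition vs_open :: "((nat \<Rightarrow> 'y) \<Rightarrow> 'y \<Rightarrow> bool) \<Rightarrow> 'y set \<Rightarrow> bool" where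
  "vs_open conv A \<longleftrightarrow> (\<forall>xs x. conv xs x \<and> x \<in> A \<longrightarrow> (\<forall>\<^sub>F n in sequentially. xs n \<in> A))"

definition vs_closed :: "((nat \<Rightarrow> 'y) \<Rightarrow> 'y \<Rightarrow> bool) \<Rightarrow> 'y set \<Rightarrow> bool" where
  "vs_closed conv A \<longleftrightarrow> (\<forall>xs x. conv xs x \<and> (\<forall>n. xs n \<in> A) \<longrightarrow> x \<in> A)"

definition vs_interior :: "((nat \<Rightarrow> 'y) \<Rightarrow> 'y \<Rightarrow> bool) \<Rightarrow> 'y set \<Rightarrow> 'y set" where
  "vs_interior conv A = \<Union>{B. B \<subseteq> A \<and> vs_open conv B}"

definition is_cone :: "((nat \<Rightarrow> 'y::real_vector) \<Rightarrow> 'y \<Rightarrow> bool) \<Rightarrow> 'y set \<Rightarrow> bool" where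
  "is_cone conv K \<longleftrightarrow> K \<noteq> {} \<and> vs_closed conv K \<and>
     (\<forall>(c::real) x. c \<ge> 0 \<and> x \<in> K \<longrightarrow> c *\<^sub>R x \<in> K) \<and>
     (\<forall>x y. x \<in> K \<and> y \<in> K \<longrightarrow> x + y \<in> K) \<and>
     K \<inter> uminus ` K = {0}"

definition solid_cone :: "((nat \<Rightarrow> 'y::real_vector) \<Rightarrow> 'y \<Rightarrow> bool) \<Rightarrow> 'y set \<Rightarrow> bool" where
  "solid_cone conv K \<longleftrightarrow> is_cone conv K \<and> K \<noteq> {0} \<and> vs_interior conv K \<noteq> {}"

definition vector_ordering ::
  "((nat \<Rightarrow> 'y::real_vector) \<Rightarrow> 'y \<Rightarrow> bool) \<Rightarrow> ('y \<Rightarrow> 'y \<Rightarrow> bool) \<Rightarrow> bool" where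
  "vector_ordering conv le \<longleftrightarrow>
     (\<forall>x. le x x) \<and> (\<forall>x y z. le x y \<and> le y z \<longrightarrow> le x z) \<and>
     (\<forall>x y. le x y \<and> le y x \<longrightarrow> x = y) \<and>
     (\<forall>x y z. le x y \<longrightarrow> le (x + z) (y + z)) \<and>
     (\<forall>(c::real) x y. c \<ge> 0 \<and> le x y \<longrightarrow> le (c *\<^sub>R x) (c *\<^sub>R y)) \<and>
     (\<forall>xs x ys y. conv xs x \<and> conv ys y \<and> (\<forall>n. le (xs n) (ys n)) \<longrightarrow> le x y)"

definition pos_cone :: "('y::real_vector \<Rightarrow> 'y \<Rightarrow> bool) \<Rightarrow> 'y set" where
  "pos_cone le = {x. le 0 x}"

definition solid_vector_space ::
  "((nat \<Rightarrow> 'y::real_vector) \<Rightarrow> 'y \<Rightarrow> bool) \<Rightarrow> ('y \<Rightarrow> 'y \<Rightarrow> bool) \<Rightarrow> bool" where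
  "solid_vector_space conv le \<longleftrightarrow>
     vs_conv conv \<and> vector_ordering conv le \<and> solid_cone conv (pos_cone le)"

definition sv_less ::
  "((nat \<Rightarrow> 'y::real_vector) \<Rightarrow> 'y \<Rightarrow> bool) \<Rightarrow> ('y \<Rightarrow> 'y \<Rightarrow> bool) \<Rightarrow> 'y \<Rightarrow> 'y \<Rightarrow> bool" where
  "sv_less conv le x y \<longleftrightarrow> y - x \<in> vs_interior conv (pos_cone le)"

definition semimonotone_norm :: "('y::real_vector \<Rightarrow> 'y \<Rightarrow> bool) \<Rightarrow> ('y \<Rightarrow> real) \<Rightarrow> bool" where
  "semimonotone_norm le nrm \<longleftrightarrow>
     (\<forall>x. nrm x \<ge> 0) \<and> (\<forall>x. nrm x = 0 \<longleftrightarrow> x = 0) \<and>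
     (\<forall>(c::real) x. nrm (c *\<^sub>R x) = \<bar>c\<bar> * nrm x) \<and>
     (\<forall>x y. nrm (x + y) \<le> nrm x + nrm y) \<and>
     (\<exists>C>0. \<forall>x y. le 0 x \<and> le x y \<longrightarrow> nrm x \<le> C * nrm y)"

section \<open>Cone metric spaces (X is the whole type 'x)\<close>

definition cone_metric ::
  "('y::real_vector \<Rightarrow> 'y \<Rightarrow> bool) \<Rightarrow> ('x \<Rightarrow> 'x \<Rightarrow> 'y) \<Rightarrow> bool" where
  "cone_metric le d \<longleftrightarrow>
     (\<forall>x y. le 0 (d x y)) \<and> (\<forall>x y. d x y = 0 \<longleftrightarrow> x = y) \<and>
     (\<forall>x y. d x y = d y x) \<and> (\<forall>x y z. le (d x y) (d x z + d z y))"

definition cm_ball ::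
  "((nat \<Rightarrow> 'y::real_vector) \<Rightarrow> 'y \<Rightarrow> bool) \<Rightarrow> ('y \<Rightarrow> 'y \<Rightarrow> bool) \<Rightarrow> ('x \<Rightarrow> 'x \<Rightarrow> 'y)
     \<Rightarrow> 'x \<Rightarrow> 'y \<Rightarrow> 'x set" where
  "cm_ball conv le d x r = {y. sv_less conv le (d y x) r}"

definition cm_open ::
  "((nat \<Rightarrow> 'y::real_vector) \<Rightarrow> 'y \<Rightarrow> bool) \<Rightarrow> ('y \<Rightarrow> 'y \<Rightarrow> bool) \<Rightarrow> ('x \<Rightarrow> 'x \<Rightarrow> 'y)
     \<Rightarrow> 'x set \<Rightarrow> bool" where
  "cm_open conv le d S \<longleftrightarrow>
     (\<forall>x\<in>S. \<exists>y r. sv_less conv le 0 r \<and> x \<in> cm_ball conv le d y r \<and> cm_ball conv le d y r \<subseteq> S)"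

definition cm_conv ::
  "((nat \<Rightarrow> 'y::real_vector) \<Rightarrow> 'y \<Rightarrow> bool) \<Rightarrow> ('y \<Rightarrow> 'y \<Rightarrow> bool) \<Rightarrow> ('x \<Rightarrow> 'x \<Rightarrow> 'y)
     \<Rightarrow> (nat \<Rightarrow> 'x) \<Rightarrow> 'x \<Rightarrow> bool" where
  "cm_conv conv le d xs x \<longleftrightarrow>
     (\<forall>c. sv_less conv le 0 c \<longrightarrow> (\<forall>\<^sub>F n in sequentially. sv_less conv le (d (xs n) x) c))"

definition cm_continuous_at_within ::
  "((nat \<Rightarrow> 'y::real_vector) \<Rightarrow> 'y \<Rightarrow> bool) \<Rightarrow> ('y \<Rightarrow> 'y \<Rightarrow> bool) \<Rightarrow> ('x \<Rightarrow> 'x \<Rightarrow> 'y)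
     \<Rightarrow> 'x set \<Rightarrow> ('x \<Rightarrow> 'x) \<Rightarrow> 'x \<Rightarrow> bool" where
  "cm_continuous_at_within conv le d D T p \<longleftrightarrow>
     (\<forall>V. cm_open conv le d V \<and> T p \<in> V \<longrightarrow>
        (\<exists>U. cm_open conv le d U \<and> p \<in> U \<and> (\<forall>x\<in>U \<inter> D. T x \<in> V)))"

text \<open>Closed graph: {(x, T x) | x \<in> D} is closed in D \<times> X with the product of the
  subspace topology on D and the topology of X.\<close>
definition cm_closed_graph ::
  "((nat \<Rightarrow> 'y::real_vector) \<Rightarrow> 'y \<Rightarrow> bool) \<Rightarrow> ('y \<Rightarrow> 'y \<Rightarrow> bool) \<Rightarrow> ('x \<Rightarrow> 'x \<Rightarrow> 'y)
     \<Rightarrow> 'x set \<Rightarrow> ('x \<Rightarrow> 'x) \<Rightarrow> bool" where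
  "cm_closed_graph conv le d D T \<longleftrightarrow>
     (\<forall>x\<in>D. \<forall>y. y \<noteq> T x \<longrightarrow>
        (\<exists>U V. cm_open conv le d U \<and> cm_open conv le d V \<and> x \<in> U \<and> y \<in> V \<and>
               (\<forall>z\<in>U \<inter> D. T z \<notin> V)))"

definition cm_lsc_at_within ::
  "((nat \<Rightarrow> 'y::real_vector) \<Rightarrow> 'y \<Rightarrow> bool) \<Rightarrow> ('y \<Rightarrow> 'y \<Rightarrow> bool) \<Rightarrow> ('x \<Rightarrow> 'x \<Rightarrow> 'y)
     \<Rightarrow> 'x set \<Rightarrow> ('x \<Rightarrow> real) \<Rightarrow> 'x \<Rightarrow> bool" where
  "cm_lsc_at_within conv le d D G p \<longleftrightarrow>
     (\<forall>e>0. \<exists>U. cm_open conv le d U \<and> p \<in> U \<and> (\<forall>x\<in>U \<inter> D. G p - e < G x))"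

end

theory Submission
  imports Defs
begin

lemma svs_C1: "solid_vector_space conv le \<Longrightarrow> conv xs x \<Longrightarrow> conv ys y \<Longrightarrow> conv (\<lambda>n. xs n + ys n) (x + y)"
  by (simp add: solid_vector_space_def vs_conv_def)
lemma svs_C2: "solid_vector_space conv le \<Longrightarrow> conv xs x \<Longrightarrow> conv (\<lambda>n. c *\<^sub>R xs n) (c *\<^sub>R x)"
  by (simp add: solid_vector_space_def vs_conv_def)
lemma svs_C3: "solid_vector_space conv le \<Longrightarrow> ls \<longlonglongrightarrow> l \<Longrightarrow> conv (\<lambda>n. ls n *\<^sub>R x) (l *\<^sub>R x)"
  by (simp add: solid_vector_space_def vs_conv_def)
lemma svs_const: "solid_vector_space conv le \<Longrightarrow> conv (\<lambda>n. x) x"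
  using svs_C3[of conv le "\<lambda>n. 1" 1 x] by simp
lemma svs_refl: "solid_vector_space conv le \<Longrightarrow> le x x"
  by (simp add: solid_vector_space_def vector_ordering_def)
lemma svs_trans: "solid_vector_space conv le \<Longrightarrow> le x y \<Longrightarrow> le y z \<Longrightarrow> le x z"
  unfolding solid_vector_space_def vector_ordering_def by blast
lemma svs_antisym: "solid_vector_space conv le \<Longrightarrow> le x y \<Longrightarrow> le y x \<Longrightarrow> x = y"
  unfolding solid_vector_space_def vector_ordering_def by blast
lemma svs_V1: "solid_vector_space conv le \<Longrightarrow> le x y \<Longrightarrow> le (x + z) (y + z)"
  unfolding solid_vector_space_def vector_ordering_def by blast
lemma svs_V2: "solid_vector_space conv le \<Longrightarrow> c \<ge> 0 \<Longrightarrow> le x y \<Longrightarrow> le (c *\<^sub>R x) (c *\<^sub>R y)"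
  unfolding solid_vector_space_def vector_ordering_def by blast
lemma svs_V3: "solid_vector_space conv le \<Longrightarrow> conv xs x \<Longrightarrow> conv ys y \<Longrightarrow> (\<forall>n. le (xs n) (ys n)) \<Longrightarrow> le x y"
  unfolding solid_vector_space_def vector_ordering_def by blast

lemma int_open: "vs_open conv (vs_interior conv A)"
  unfolding vs_open_def
proof (intro allI impI)
  fix xs x assume a: "conv xs x \<and> x \<in> vs_interior conv A"
  then obtain B where B: "B \<subseteq> A" "vs_open conv B" "x \<in> B" by (auto simp: vs_interior_def)
  then have "\<forall>\<^sub>F n in sequentially. xs n \<in> B" using a by (auto simp: vs_open_def)
  then show "\<forall>\<^sub>F n in sequentially. xs n \<in> vs_interior conv A"
    by (rule eventually_mono) (use B in \<open>auto simp: vs_interior_def\<close>)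
qed

lemma int_max: "B \<subseteq> A \<Longrightarrow> vs_open conv B \<Longrightarrow> B \<subseteq> vs_interior conv A"
  by (auto simp: vs_interior_def)

lemma int_pos: "c \<in> vs_interior conv (pos_cone le) \<Longrightarrow> le 0 c"
  by (auto simp: vs_interior_def pos_cone_def)

lemma int_ne: "solid_vector_space conv le \<Longrightarrow> \<exists>c. c \<in> vs_interior conv (pos_cone le)"
  by (auto simp: solid_vector_space_def solid_cone_def)

lemma int_scale:
  assumes S: "solid_vector_space conv le" and c: "c \<in> vs_interior conv (pos_cone le)" and t: "t > 0"
  shows "t *\<^sub>R c \<in> vs_interior conv (pos_cone le)"
proof -
  let ?I = "vs_interior conv (pos_cone le)"
  let ?B = "(\<lambda>u. t *\<^sub>R u) ` ?I"
  have "vs_open conv ?B" unfolding vs_open_def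
  proof (intro allI impI)
    fix xs x assume a: "conv xs x \<and> x \<in> ?B"
    then obtain u where u: "u \<in> ?I" "x = t *\<^sub>R u" by auto
    have "conv (\<lambda>n. (1/t) *\<^sub>R xs n) ((1/t) *\<^sub>R x)" using svs_C2[OF S] a by blast
    moreover have "(1/t) *\<^sub>R x = u" using u t by simp
    ultimately have "\<forall>\<^sub>F n in sequentially. (1/t) *\<^sub>R xs n \<in> ?I"
      using int_open[of conv "pos_cone le"] u unfolding vs_open_def by metis
    then show "\<forall>\<^sub>F n in sequentially. xs n \<in> ?B"
    proof (rule eventually_mono)
      fix n assume "(1/t) *\<^sub>R xs n \<in> ?I"
      moreover have "xs n = t *\<^sub>R ((1/t) *\<^sub>R xs n)" using t by simp
      ultimately show "xs n \<in> ?B" by blast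
    qed
  qed
  moreover have "?B \<subseteq> pos_cone le"
  proof
    fix y assume "y \<in> ?B"
    then obtain u where u: "u \<in> ?I" "y = t *\<^sub>R u" by auto
    have "le (t *\<^sub>R 0) (t *\<^sub>R u)" using svs_V2[OF S, of t 0 u] t int_pos[OF u(1)] by simp
    then have "le 0 (t *\<^sub>R u)" by simp
    then show "y \<in> pos_cone le" using u by (simp add: pos_cone_def)
  qed
  ultimately have "?B \<subseteq> ?I" by (rule int_max[rotated])
  then show ?thesis using c by blast
qed

lemma int_add:
  assumes S: "solid_vector_space conv le" and c: "c \<in> vs_interior conv (pos_cone le)" and k: "le 0 k"
  shows "c + k \<in> vs_interior conv (pos_cone le)"
proof -
  let ?I = "vs_interior conv (pos_cone le)"
  let ?B = "(\<lambda>u. u + k) ` ?I"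
  have "vs_open conv ?B" unfolding vs_open_def
  proof (intro allI impI)
    fix xs x assume a: "conv xs x \<and> x \<in> ?B"
    then obtain u where u: "u \<in> ?I" "x = u + k" by auto
    have "conv (\<lambda>n. xs n + (- k)) (x + (- k))" using svs_C1[OF S] svs_const[OF S] a by blast
    moreover have "x + (- k) = u" using u by simp
    ultimately have "\<forall>\<^sub>F n in sequentially. xs n + (- k) \<in> ?I"
      using int_open[of conv "pos_cone le"] u unfolding vs_open_def by metis
    then show "\<forall>\<^sub>F n in sequentially. xs n \<in> ?B"
    proof (rule eventually_mono)
      fix n assume "xs n + (- k) \<in> ?I"
      moreover have "xs n = (xs n + (- k)) + k" by simp
      ultimately show "xs n \<in> ?B" by blast
    qed
  qed
  moreover have "?B \<subseteq> pos_cone le"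
  proof
    fix y assume "y \<in> ?B"
    then obtain u where u: "u \<in> ?I" "y = u + k" by auto
    have "le (0 + k) (u + k)" using svs_V1[OF S] int_pos[OF u(1)] by blast
    then have "le 0 (u + k)" using svs_trans[OF S k] by simp
    then show "y \<in> pos_cone le" using u by (simp add: pos_cone_def)
  qed
  ultimately have "?B \<subseteq> ?I" by (rule int_max[rotated])
  then show ?thesis using c by blast
qed

lemma ev_ex: "eventually P sequentially \<Longrightarrow> \<exists>n. P n"
  unfolding eventually_sequentially by blast

lemma sv_less_0: "sv_less conv le 0 x \<longleftrightarrow> x \<in> vs_interior conv (pos_cone le)"
  by (simp add: sv_less_def)

lemma less_imp_le:
  assumes S: "solid_vector_space conv le" and "sv_less conv le a b" shows "le a b"
proof -
  have "le 0 (b - a)" using assms int_pos by (auto simp: sv_less_def)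
  then have "le (0 + a) (b - a + a)" using svs_V1[OF S] by blast
  then show ?thesis by simp
qed

lemma le_diff:
  assumes S: "solid_vector_space conv le" and "le a b" shows "le 0 (b - a)"
proof -
  have "le (a + - a) (b + - a)" using svs_V1[OF S] assms(2) by blast
  then show ?thesis by simp
qed

lemma le_less_trans':
  assumes S: "solid_vector_space conv le" and "le a b" "sv_less conv le b c"
  shows "sv_less conv le a c"
proof -
  have "(c - b) + (b - a) \<in> vs_interior conv (pos_cone le)"
    by (rule int_add[OF S]) (use assms le_diff[OF S] in \<open>auto simp: sv_less_def\<close>)
  then show ?thesis by (simp add: sv_less_def)
qed

lemma le_add:
  assumes S: "solid_vector_space conv le" and "le a b" "le c e" shows "le (a + c) (b + e)"
proof -
  have "le (a + c) (b + c)" using svs_V1[OF S] assms by blast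
  moreover have "le (c + b) (e + b)" using svs_V1[OF S] assms by blast
  ultimately show ?thesis using svs_trans[OF S] by (simp add: add.commute)
qed

lemma zero_lemma:
  assumes S: "solid_vector_space conv le" and a: "le 0 a"
    and all: "\<forall>c\<in>vs_interior conv (pos_cone le). le a c"
  shows "a = 0"
proof -
  obtain c0 where c0: "c0 \<in> vs_interior conv (pos_cone le)" using int_ne[OF S] by blast
  have "conv (\<lambda>n. inverse (real (Suc n)) *\<^sub>R c0) (0 *\<^sub>R c0)"
    using svs_C3[OF S LIMSEQ_inverse_real_of_nat] .
  then have cv: "conv (\<lambda>n. inverse (real (Suc n)) *\<^sub>R c0) 0" by simp
  have "\<forall>n. le a (inverse (real (Suc n)) *\<^sub>R c0)"
    using all int_scale[OF S c0] by simp
  then have "le a 0" using svs_V3[OF S svs_const[OF S] cv] by blast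
  then show ?thesis using svs_antisym[OF S] a by blast
qed

lemma cm_tri: "cone_metric le d \<Longrightarrow> le (d x y) (d x z + d z y)"
  unfolding cone_metric_def by blast
lemma cm_sym: "cone_metric le d \<Longrightarrow> d x y = d y x"
  by (simp add: cone_metric_def)
lemma cm_pos: "cone_metric le d \<Longrightarrow> le 0 (d x y)"
  by (simp add: cone_metric_def)
lemma cm_zero: "cone_metric le d \<Longrightarrow> d x y = 0 \<longleftrightarrow> x = y"
  by (simp add: cone_metric_def)

lemma cm_conv_open:
  assumes S: "solid_vector_space conv le" and M: "cone_metric le d"
    and cv: "cm_conv conv le d xs p" and U: "cm_open conv le d U" and p: "p \<in> U"
  shows "\<forall>\<^sub>F n in sequentially. xs n \<in> U"
proof -
  obtain y r where r: "sv_less conv le 0 r" "p \<in> cm_ball conv le d y r" "cm_ball conv le d y r \<subseteq> U"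
    using U p unfolding cm_open_def by blast
  have c: "sv_less conv le 0 (r - d p y)" using r(2) by (simp add: cm_ball_def sv_less_def)
  have "\<forall>\<^sub>F n in sequentially. sv_less conv le (d (xs n) p) (r - d p y)"
    using cv c unfolding cm_conv_def by blast
  then show ?thesis
  proof (rule eventually_mono)
    fix n assume h: "sv_less conv le (d (xs n) p) (r - d p y)"
    have "((r - d p y) - d (xs n) p) + ((d (xs n) p + d p y) - d (xs n) y) \<in> vs_interior conv (pos_cone le)"
      by (rule int_add[OF S]) (use h le_diff[OF S cm_tri[OF M]] in \<open>simp_all add: sv_less_def\<close>)
    then have "sv_less conv le (d (xs n) y) r" by (simp add: sv_less_def algebra_simps)
    then show "xs n \<in> U" using r(3) by (auto simp: cm_ball_def)
  qed
qed

lemma half_int: "solid_vector_space conv le \<Longrightarrow> c \<in> vs_interior conv (pos_cone le) \<Longrightarrow>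
   sv_less conv le 0 ((1/2) *\<^sub>R c)"
  using int_scale[of conv le c "1/2"] by (simp add: sv_less_def)

lemma halves: "(1/2) *\<^sub>R c + (1/2) *\<^sub>R c = (c::'a::real_vector)"
  by (simp add: scaleR_add_left[symmetric])

lemma cm_unique:
  assumes S: "solid_vector_space conv le" and M: "cone_metric le d"
    and a: "cm_conv conv le d xs a" and b: "cm_conv conv le d xs b"
  shows "a = b"
proof -
  have "d a b = 0"
  proof (rule zero_lemma[OF S cm_pos[OF M]], intro ballI)
    fix c assume c: "c \<in> vs_interior conv (pos_cone le)"
    have h: "sv_less conv le 0 ((1/2) *\<^sub>R c)" using half_int[OF S c] .
    have "\<forall>\<^sub>F n in sequentially. sv_less conv le (d (xs n) a) ((1/2) *\<^sub>R c) \<and>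
         sv_less conv le (d (xs n) b) ((1/2) *\<^sub>R c)"
      using a b h unfolding cm_conv_def eventually_conj_iff by blast
    from ev_ex[OF this] obtain n where n: "sv_less conv le (d (xs n) a) ((1/2) *\<^sub>R c)"
        "sv_less conv le (d (xs n) b) ((1/2) *\<^sub>R c)"
      by blast
    have "le (d (xs n) a + d (xs n) b) ((1/2) *\<^sub>R c + (1/2) *\<^sub>R c)"
      by (rule le_add[OF S less_imp_le[OF S n(1)] less_imp_le[OF S n(2)]])
    then have "le (d a (xs n) + d (xs n) b) c" using cm_sym[OF M, of a "xs n"] halves[of c] by simp
    then show "le (d a b) c" using svs_trans[OF S cm_tri[OF M]] by blast
  qed
  then show ?thesis using cm_zero[OF M] by blast
qed

theorem proposition10p1:
  fixes conv :: "(nat \<Rightarrow> 'y::real_vector) \<Rightarrow> 'y \<Rightarrow> bool"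
    and le :: "'y \<Rightarrow> 'y \<Rightarrow> bool"
    and d :: "'x \<Rightarrow> 'x \<Rightarrow> 'y"
    and D :: "'x set" and T :: "'x \<Rightarrow> 'x" and x0 \<xi> :: 'x
  assumes "solid_vector_space conv le"
    and "cone_metric le d"
    and "x0 \<in> D"
    and "\<forall>n. (T ^^ n) x0 \<in> D"
    and "cm_conv conv le d (\<lambda>n. (T ^^ n) x0) \<xi>"
    and "\<xi> \<in> D"
  shows "(cm_continuous_at_within conv le d D T \<xi> \<longrightarrow> T \<xi> = \<xi>) \<and>
         (cm_closed_graph conv le d D T \<longrightarrow> T \<xi> = \<xi>) \<and>
         ((\<exists>nrm. semimonotone_norm le nrm \<and>
             cm_lsc_at_within conv le d D (\<lambda>x. nrm (d x (T x))) \<xi>) \<longrightarrow> T \<xi> = \<xi>) \<and>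
         ((\<exists>\<alpha> \<beta>::real. \<alpha> \<ge> 0 \<and> \<beta> \<ge> 0 \<and>
             (\<forall>x\<in>D. le (d \<xi> (T \<xi>)) (\<alpha> *\<^sub>R d x \<xi> + \<beta> *\<^sub>R d (T x) \<xi>))) \<longrightarrow> T \<xi> = \<xi>)"
proof -
  note S = assms(1) and M = assms(2)
  define x where "x = (\<lambda>n. (T ^^ n) x0)"
  have xD: "\<And>n. x n \<in> D" using assms(4) by (simp add: x_def)
  have xS: "\<And>n. x (Suc n) = T (x n)" by (simp add: x_def)
  have cx: "cm_conv conv le d x \<xi>" using assms(5) by (simp add: x_def)
  have cxS: "cm_conv conv le d (\<lambda>n. x (Suc n)) \<xi>"
    unfolding cm_conv_def
  proof (intro allI impI)
    fix c assume "sv_less conv le 0 c"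
    then have "\<forall>\<^sub>F n in sequentially. sv_less conv le (d (x n) \<xi>) c"
      using cx unfolding cm_conv_def by blast
    then show "\<forall>\<^sub>F n in sequentially. sv_less conv le (d (x (Suc n)) \<xi>) c"
      using eventually_sequentially_Suc[of "\<lambda>n. sv_less conv le (d (x n) \<xi>) c"] by simp
  qed
  have F1: "T \<xi> = \<xi>" if C: "cm_continuous_at_within conv le d D T \<xi>"
  proof -
    have "cm_conv conv le d (\<lambda>n. x (Suc n)) (T \<xi>)" unfolding cm_conv_def
    proof (intro allI impI)
      fix c assume c: "sv_less conv le 0 c"
      have Vo: "cm_open conv le d (cm_ball conv le d (T \<xi>) c)"
        unfolding cm_open_def using c by blast
      have Vm: "T \<xi> \<in> cm_ball conv le d (T \<xi>) c"
        using c cm_zero[OF M, of "T \<xi>" "T \<xi>"] by (simp add: cm_ball_def)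
      obtain U where U: "cm_open conv le d U" "\<xi> \<in> U"
        "\<forall>z\<in>U \<inter> D. T z \<in> cm_ball conv le d (T \<xi>) c"
        using C Vo Vm unfolding cm_continuous_at_within_def by blast
      have "\<forall>\<^sub>F n in sequentially. x n \<in> U" using cm_conv_open[OF S M cx U(1,2)] .
      then show "\<forall>\<^sub>F n in sequentially. sv_less conv le (d (x (Suc n)) (T \<xi>)) c"
        by (rule eventually_mono) (use U(3) xD xS in \<open>auto simp: cm_ball_def\<close>)
    qed
    from cm_unique[OF S M cxS this] show ?thesis by simp
  qed
  have F2: "T \<xi> = \<xi>" if C: "cm_closed_graph conv le d D T"
  proof (rule ccontr)
    assume ne: "T \<xi> \<noteq> \<xi>"
    obtain U V where UV: "cm_open conv le d U" "cm_open conv le d V" "\<xi> \<in> U" "\<xi> \<in> V"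
      "\<forall>z\<in>U \<inter> D. T z \<notin> V"
      using C[unfolded cm_closed_graph_def, rule_format, OF assms(6), of \<xi>] ne by auto
    have "\<forall>\<^sub>F n in sequentially. x n \<in> U \<and> x (Suc n) \<in> V"
      using cm_conv_open[OF S M cx UV(1,3)] cm_conv_open[OF S M cxS UV(2,4)]
      by (simp add: eventually_conj_iff)
    then obtain n where "x n \<in> U" "x (Suc n) \<in> V"
      using ev_ex by blast
    then show False using UV(5) xD xS by auto
  qed
  have F3: "T \<xi> = \<xi>" if H3: "\<exists>nrm. semimonotone_norm le nrm \<and>
             cm_lsc_at_within conv le d D (\<lambda>x. nrm (d x (T x))) \<xi>"
  proof -
    obtain nrm where N: "semimonotone_norm le nrm"
      and L: "cm_lsc_at_within conv le d D (\<lambda>x. nrm (d x (T x))) \<xi>" using H3 by blast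
    note N' = N[unfolded semimonotone_norm_def]
    have nn: "\<And>a. nrm a \<ge> 0" using N'[THEN conjunct1] by blast
    have nz: "\<And>a. nrm a = 0 \<longleftrightarrow> a = 0" using N'[THEN conjunct2, THEN conjunct1] by blast
    have ns: "\<And>t a. nrm (t *\<^sub>R a) = \<bar>t\<bar> * nrm a"
      using N'[THEN conjunct2, THEN conjunct2, THEN conjunct1] by blast
    obtain C where C: "C > 0" "\<forall>a b. le 0 a \<and> le a b \<longrightarrow> nrm a \<le> C * nrm b"
      using N'[THEN conjunct2, THEN conjunct2, THEN conjunct2, THEN conjunct2] by blast
    define G where "G = nrm (d \<xi> (T \<xi>))"
    have "\<not> G > 0"
    proof
      assume G: "G > 0"
      obtain U where U: "cm_open conv le d U" "\<xi> \<in> U"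
        "\<forall>z\<in>U \<inter> D. G - G/2 < nrm (d z (T z))"
        using L[unfolded cm_lsc_at_within_def, rule_format, of "G/2"] G unfolding G_def by fastforce
      obtain c where c: "c \<in> vs_interior conv (pos_cone le)" using int_ne[OF S] by blast
      define \<delta> where "\<delta> = G / (4 * C * nrm c + 1)"
      have npos: "nrm c \<ge> 0" using nn by blast
      have "0 \<le> 4 * C * nrm c" using C(1) npos by simp
      then have den: "4 * C * nrm c + 1 > 0" by linarith
      have \<delta>pos: "\<delta> > 0" unfolding \<delta>_def using G den by simp
      have dc: "sv_less conv le 0 (\<delta> *\<^sub>R c)" using int_scale[OF S c \<delta>pos] by (simp add: sv_less_def)
      have e1: "\<forall>\<^sub>F n in sequentially. sv_less conv le (d (x n) \<xi>) (\<delta> *\<^sub>R c)"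
        using cx dc unfolding cm_conv_def by blast
      have e2: "\<forall>\<^sub>F n in sequentially. sv_less conv le (d (x (Suc n)) \<xi>) (\<delta> *\<^sub>R c)"
        using cxS dc unfolding cm_conv_def by blast
      have "\<forall>\<^sub>F n in sequentially. x n \<in> U \<and> sv_less conv le (d (x n) \<xi>) (\<delta> *\<^sub>R c)
            \<and> sv_less conv le (d (x (Suc n)) \<xi>) (\<delta> *\<^sub>R c)"
        by (rule eventually_conj[OF cm_conv_open[OF S M cx U(1,2)] eventually_conj[OF e1 e2]])
      from ev_ex[OF this] obtain n where n: "x n \<in> U" "sv_less conv le (d (x n) \<xi>) (\<delta> *\<^sub>R c)"
        "sv_less conv le (d (x (Suc n)) \<xi>) (\<delta> *\<^sub>R c)"
        by blast
      have "le (d (x n) \<xi> + d (x (Suc n)) \<xi>) (\<delta> *\<^sub>R c + \<delta> *\<^sub>R c)"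
        by (rule le_add[OF S less_imp_le[OF S n(2)] less_imp_le[OF S n(3)]])
      then have "le (d (x n) \<xi> + d \<xi> (x (Suc n))) (\<delta> *\<^sub>R c + \<delta> *\<^sub>R c)"
        using cm_sym[OF M, of "x (Suc n)" \<xi>] by simp
      moreover have "\<delta> *\<^sub>R c + \<delta> *\<^sub>R c = (2 * \<delta>) *\<^sub>R c"
        by (simp add: scaleR_add_left[symmetric])
      ultimately have "le (d (x n) (x (Suc n))) ((2 * \<delta>) *\<^sub>R c)"
        using svs_trans[OF S cm_tri[OF M, of "x n" "x (Suc n)" \<xi>]] by simp
      then have "nrm (d (x n) (x (Suc n))) \<le> C * nrm ((2 * \<delta>) *\<^sub>R c)"
        using C(2) cm_pos[OF M] by blast
      also have "\<dots> = 2 * C * \<delta> * nrm c" using ns \<delta>pos by simp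
      also have "\<dots> < G / 2"
      proof -
        have h: "\<delta> * (4 * C * nrm c + 1) = G" unfolding \<delta>_def using den by simp
        have "4 * C * \<delta> * nrm c = G - \<delta>" using h by (simp add: algebra_simps)
        then show ?thesis using \<delta>pos by linarith
      qed
      finally have "nrm (d (x n) (T (x n))) < G/2" using xS by simp
      moreover have "G - G/2 < nrm (d (x n) (T (x n)))" using U(3) n(1) xD by blast
      ultimately show False by simp
    qed
    then have "G = 0" using nn[of "d \<xi> (T \<xi>)"] unfolding G_def by linarith
    then show ?thesis using nz[of "d \<xi> (T \<xi>)"] cm_zero[OF M, of \<xi> "T \<xi>"] unfolding G_def by simp
  qed
  have F4: "T \<xi> = \<xi>" if H4: "\<exists>\<alpha> \<beta>::real. \<alpha> \<ge> 0 \<and> \<beta> \<ge> 0 \<and>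
             (\<forall>x\<in>D. le (d \<xi> (T \<xi>)) (\<alpha> *\<^sub>R d x \<xi> + \<beta> *\<^sub>R d (T x) \<xi>))"
  proof -
    obtain \<alpha> \<beta> :: real where ab: "\<alpha> \<ge> 0" "\<beta> \<ge> 0"
      "\<forall>x\<in>D. le (d \<xi> (T \<xi>)) (\<alpha> *\<^sub>R d x \<xi> + \<beta> *\<^sub>R d (T x) \<xi>)" using H4 by blast
    have "d \<xi> (T \<xi>) = 0"
    proof (rule zero_lemma[OF S cm_pos[OF M]], intro ballI)
      fix c assume c: "c \<in> vs_interior conv (pos_cone le)"
      define c' where "c' = (1 / (\<alpha> + \<beta> + 1)) *\<^sub>R c"
      have c'i: "c' \<in> vs_interior conv (pos_cone le)"
        unfolding c'_def using int_scale[OF S c] ab by simp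
      have c'l: "sv_less conv le 0 c'" using c'i by (simp add: sv_less_def)
      have e1: "\<forall>\<^sub>F n in sequentially. sv_less conv le (d (x n) \<xi>) c'"
        using cx c'l unfolding cm_conv_def by blast
      have e2: "\<forall>\<^sub>F n in sequentially. sv_less conv le (d (x (Suc n)) \<xi>) c'"
        using cxS c'l unfolding cm_conv_def by blast
      have "\<forall>\<^sub>F n in sequentially. sv_less conv le (d (x n) \<xi>) c'
            \<and> sv_less conv le (d (x (Suc n)) \<xi>) c'"
        by (rule eventually_conj[OF e1 e2])
      from ev_ex[OF this] obtain n where n: "sv_less conv le (d (x n) \<xi>) c'" "sv_less conv le (d (x (Suc n)) \<xi>) c'"
        by blast
      have "le (\<alpha> *\<^sub>R d (x n) \<xi> + \<beta> *\<^sub>R d (x (Suc n)) \<xi>) (\<alpha> *\<^sub>R c' + \<beta> *\<^sub>R c')"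
        by (rule le_add[OF S svs_V2[OF S ab(1) less_imp_le[OF S n(1)]] svs_V2[OF S ab(2) less_imp_le[OF S n(2)]]])
      then have "le (\<alpha> *\<^sub>R d (x n) \<xi> + \<beta> *\<^sub>R d (T (x n)) \<xi>) (\<alpha> *\<^sub>R c' + \<beta> *\<^sub>R c')"
        using xS by simp
      moreover have "\<alpha> *\<^sub>R c' + \<beta> *\<^sub>R c' + c' = c"
      proof -
        have p: "\<alpha> + \<beta> + 1 > 0" using ab by linarith
        have "\<alpha> / (\<alpha> + \<beta> + 1) + \<beta> / (\<alpha> + \<beta> + 1) + 1 / (\<alpha> + \<beta> + 1) = 1"
          using p by (simp add: add_divide_distrib[symmetric])
        then show ?thesis unfolding c'_def by (simp add: scaleR_add_left[symmetric])
      qed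
      then have "le (\<alpha> *\<^sub>R c' + \<beta> *\<^sub>R c') c"
        using svs_V1[OF S int_pos[OF c'i], of "\<alpha> *\<^sub>R c' + \<beta> *\<^sub>R c'"] by (simp add: add.commute)
      ultimately show "le (d \<xi> (T \<xi>)) c"
        using svs_trans[OF S] ab(3)[rule_format, OF xD[of n]] by blast
    qed
    then show ?thesis using cm_zero[OF M, of \<xi> "T \<xi>"] by simp
  qed
  show ?thesis using F1 F2 F3 F4 by blast
qed

end
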